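(* Let $\mathcal A=C_b(\mathbb R)$ act on $L^2(\mathbb R)$ by multiplication, $(\pi(f)\psi)(x)=f(x)\psi(x)$, let $\alpha:\mathbb R\to\mathrm{Aut}(\mathcal A)$ be the translation action $(\alpha_tf)(x)=f(x+t)$, and let $(U_t\psi)(x)=\psi(x+t)$ on $L^2(\mathbb R)$. Then the covariant representation $(\pi,U)$ of $(\mathcal A,\mathbb R,\alpha)$ is not a cross representation with respect to the host $\mathcal L=C^*(\mathbb R)$; that is, $\pi(\mathcal A)U_{\mathcal L}(\mathcal L)\not\subseteq U_{\mathcal L}(\mathcal L)\mathcal B(L^2(\mathbb R))$.
   Context: $U_{\mathcal L}$ is the integrated representation of $C^*(\mathbb R)$, so $U_{\mathcal L}(\mathcal L)=\{f(P):f\in C_0(\mathbb R)\}$ where $U_t=e^{itP}$, $P=-i\frac{d}{dx}$; $U_{\mathcal L}(\mathcal L)\mathcal B(L^2(\mathbb R))$ denotes the set of products $LB$. *)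

theory Defs
  imports "HOL-Analysis.Analysis"
begin

text \<open>Concrete model of L^2(R): square-integrable Borel functions real => complex,
  identified modulo equality almost everywhere (w.r.t. Lebesgue measure).\<close>

definition L2 :: "(real \<Rightarrow> complex) \<Rightarrow> bool" where
  "L2 \<psi> \<longleftrightarrow> \<psi> \<in> borel_measurable lborel \<and> integrable lborel (\<lambda>x. (cmod (\<psi> x))\<^sup>2)"

definition L2norm :: "(real \<Rightarrow> complex) \<Rightarrow> real" where
  "L2norm \<psi> = sqrt (LINT x|lborel. (cmod (\<psi> x))\<^sup>2)"

type_synonym op = "(real \<Rightarrow> complex) \<Rightarrow> (real \<Rightarrow> complex)"

definition op_eq :: "op \<Rightarrow> op \<Rightarrow> bool" where
  "op_eq S T \<longleftrightarrow> (\<forall>\<psi>. L2 \<psi> \<longrightarrow> (AE x in lborel. S \<psi> x = T \<psi> x))"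

definition bounded_op :: "op \<Rightarrow> bool" where
  "bounded_op T \<longleftrightarrow>
     (\<forall>\<psi>. L2 \<psi> \<longrightarrow> L2 (T \<psi>)) \<and>
     (\<forall>\<psi> \<phi>. L2 \<psi> \<longrightarrow> L2 \<phi> \<longrightarrow> (AE x in lborel. \<psi> x = \<phi> x) \<longrightarrow>
        (AE x in lborel. T \<psi> x = T \<phi> x)) \<and>
     (\<forall>\<psi> \<phi> c. L2 \<psi> \<longrightarrow> L2 \<phi> \<longrightarrow>
        (AE x in lborel. T (\<lambda>y. \<psi> y + c * \<phi> y) x = T \<psi> x + c * T \<phi> x)) \<and>
     (\<exists>C. \<forall>\<psi>. L2 \<psi> \<longrightarrow> L2norm (T \<psi>) \<le> C * L2norm \<psi>)"

definition op_dist :: "op \<Rightarrow> op \<Rightarrow> real" where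
  "op_dist S T = Sup {L2norm (\<lambda>x. S \<psi> x - T \<psi> x) | \<psi>. L2 \<psi> \<and> L2norm \<psi> \<le> 1}"

definition mult_op :: "(real \<Rightarrow> complex) \<Rightarrow> op" where
  "mult_op f \<psi> = (\<lambda>x. f x * \<psi> x)"

definition Cb :: "(real \<Rightarrow> complex) set" where
  "Cb = {f. continuous_on UNIV f \<and> bounded (range f)}"

definition transl :: "real \<Rightarrow> op" where
  "transl t \<psi> = (\<lambda>x. \<psi> (x + t))"

definition integrated :: "(real \<Rightarrow> complex) \<Rightarrow> op" where
  "integrated \<phi> \<psi> = (\<lambda>x. LINT t|lborel. \<phi> t * transl t \<psi> x)"

text \<open>U_L(L) for L = C^*(R): the image of the integrated representation of C^*(R),
  i.e. the operator-norm closure of the image of L^1(R).\<close>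
definition UL :: "op set" where
  "UL = {L. bounded_op L \<and>
           (\<forall>e>0. \<exists>\<phi>. integrable lborel \<phi> \<and> op_dist L (integrated \<phi>) < e)}"

end

theory Submission
  imports Defs
begin

lemma ennreal_sq_le:
  assumes "(x::ennreal)^2 \<le> (ennreal r)^2" "r \<ge> 0" shows "x \<le> ennreal r"
proof (cases x rule: ennreal_cases)
  case (real q)
  then have "q^2 \<le> r^2" using assms real by (simp add: ennreal_power)
  then have "q \<le> r" using assms real using power2_le_imp_le by blast
  then show ?thesis using real by simp
next
  case top then show ?thesis using assms by (simp add: ennreal_power top_unique)
qed
lemma ennreal_sum3: "a \<ge> 0 \<Longrightarrow> b \<ge> 0 \<Longrightarrow> c \<ge> 0 \<Longrightarrow> ennreal a + 2 * ennreal b + ennreal c = ennreal (a + 2 * b + c)"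
  by (simp add: ennreal_plus ennreal_mult')

lemma L2_meas: "L2 g \<Longrightarrow> g \<in> borel_measurable borel"
  by (simp add: L2_def)

lemma L2norm_nn:
  assumes "g \<in> borel_measurable borel"
  shows "L2norm g = sqrt (enn2real (\<integral>\<^sup>+x. ennreal ((cmod (g x))\<^sup>2) \<partial>lborel))"
  unfolding L2norm_def
  by (subst integral_eq_nn_integral) (use assms in auto)

lemma L2_iff:
  "L2 g \<longleftrightarrow> g \<in> borel_measurable borel \<and> (\<integral>\<^sup>+x. ennreal ((cmod (g x))\<^sup>2) \<partial>lborel) < \<infinity>"
  unfolding L2_def integrable_iff_bounded by auto

lemma L2norm_sq:
  assumes "L2 g"
  shows "ennreal ((L2norm g)\<^sup>2) = (\<integral>\<^sup>+x. ennreal ((cmod (g x))\<^sup>2) \<partial>lborel)"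
  using assms unfolding L2_iff
  by (subst L2norm_nn) (auto simp: less_top)

lemma L2normI:
  assumes g: "g \<in> borel_measurable borel" and r: "r \<ge> 0"
    and le: "(\<integral>\<^sup>+x. ennreal ((cmod (g x))\<^sup>2) \<partial>lborel) \<le> ennreal (r\<^sup>2)"
  shows "L2 g" "L2norm g \<le> r"
proof -
  show "L2 g" using g le unfolding L2_iff by (auto intro: le_less_trans)
  have "enn2real (\<integral>\<^sup>+x. ennreal ((cmod (g x))\<^sup>2) \<partial>lborel) \<le> r\<^sup>2"
    using le r by (metis enn2real_ennreal enn2real_mono ennreal_neq_top top.not_eq_extremum zero_le_power2)
  then show "L2norm g \<le> r" using g r
    by (subst L2norm_nn) (auto intro: real_le_lsqrt)
qed

lemma L2norm_nonneg: "L2norm g \<ge> 0"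
  by (simp add: L2norm_def)

lemma borel_measurable_cnj[measurable]:
  "h \<in> borel_measurable M \<Longrightarrow> (\<lambda>x. cnj (h x)) \<in> borel_measurable M"
  using borel_measurable_continuous_on[OF continuous_on_cnj[OF continuous_on_id]] by blast


lemma CS_nn:
  assumes g: "L2 g" and h: "L2 h"
  shows "(\<integral>\<^sup>+x. ennreal (cmod (g x) * cmod (h x)) \<partial>lborel) \<le> ennreal (L2norm g * L2norm h)"
proof -
  have [measurable]: "g \<in> borel_measurable borel" "h \<in> borel_measurable borel"
    using g h by (auto simp: L2_def)
  have "(\<integral>\<^sup>+x. ennreal (cmod (g x)) * ennreal (cmod (h x)) \<partial>lborel)\<^sup>2 \<le>
     (\<integral>\<^sup>+x. ennreal (cmod (g x)) ^ 2 \<partial>lborel) * (\<integral>\<^sup>+x. ennreal (cmod (h x)) ^ 2 \<partial>lborel)"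
    by (rule Cauchy_Schwarz_nn_integral) auto
  also have "\<dots> = ennreal ((L2norm g)\<^sup>2) * ennreal ((L2norm h)\<^sup>2)"
    using g h by (simp add: L2norm_sq ennreal_power)
  also have "\<dots> = (ennreal (L2norm g * L2norm h))\<^sup>2"
    by (simp add: ennreal_mult' ennreal_power power_mult_distrib L2norm_nonneg)
  finally have "(\<integral>\<^sup>+x. ennreal (cmod (g x) * cmod (h x)) \<partial>lborel)\<^sup>2 \<le> (ennreal (L2norm g * L2norm h))\<^sup>2"
    by (simp add: ennreal_mult')
  then show ?thesis
    by (rule ennreal_sq_le) (simp add: L2norm_nonneg)
qed

lemma CS:
  assumes g: "L2 g" and h: "L2 h"
  shows "integrable lborel (\<lambda>x. g x * cnj (h x))"
    "cmod (LINT x|lborel. g x * cnj (h x)) \<le> L2norm g * L2norm h"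
proof -
  have [measurable]: "g \<in> borel_measurable borel" "h \<in> borel_measurable borel"
    using g h by (auto simp: L2_def)
  have fin: "(\<integral>\<^sup>+x. ennreal (cmod (g x * cnj (h x))) \<partial>lborel) \<le> ennreal (L2norm g * L2norm h)"
    using CS_nn[OF g h] by (simp add: norm_mult)
  have meas: "(\<lambda>x. g x * cnj (h x)) \<in> borel_measurable borel" by measurable
  show int: "integrable lborel (\<lambda>x. g x * cnj (h x))"
    unfolding integrable_iff_bounded using fin meas by (auto intro: le_less_trans)
  have "ennreal (cmod (LINT x|lborel. g x * cnj (h x))) \<le> ennreal (L2norm g * L2norm h)"
    using integral_norm_bound_ennreal[OF int] fin by (rule order_trans)
  then show "cmod (LINT x|lborel. g x * cnj (h x)) \<le> L2norm g * L2norm h"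
    by (simp add: L2norm_nonneg)
qed

lemma L2_diff:
  assumes g: "L2 g" and h: "L2 h"
  shows "L2 (\<lambda>x. g x - h x)" "L2norm (\<lambda>x. g x - h x) \<le> L2norm g + L2norm h"
proof -
  have [measurable]: "g \<in> borel_measurable borel" "h \<in> borel_measurable borel"
    using g h by (auto simp: L2_def)
  have "(\<integral>\<^sup>+x. ennreal ((cmod (g x - h x))\<^sup>2) \<partial>lborel) \<le>
        (\<integral>\<^sup>+x. ennreal ((cmod (g x))\<^sup>2) + 2 * ennreal (cmod (g x) * cmod (h x)) + ennreal ((cmod (h x))\<^sup>2) \<partial>lborel)"
  proof (rule nn_integral_mono)
    fix x
    have "(cmod (g x - h x))\<^sup>2 \<le> (cmod (g x) + cmod (h x))\<^sup>2"
      by (intro power_mono norm_triangle_ineq4) auto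
    also have "\<dots> = (cmod (g x))\<^sup>2 + 2 * (cmod (g x) * cmod (h x)) + (cmod (h x))\<^sup>2"
      by (simp add: power2_sum)
    finally have "(cmod (g x - h x))\<^sup>2 \<le> (cmod (g x))\<^sup>2 + 2 * (cmod (g x) * cmod (h x)) + (cmod (h x))\<^sup>2" .
    then have "ennreal ((cmod (g x - h x))\<^sup>2) \<le> ennreal ((cmod (g x))\<^sup>2 + 2 * (cmod (g x) * cmod (h x)) + (cmod (h x))\<^sup>2)"
      by (rule ennreal_leI)
    also have "\<dots> = ennreal ((cmod (g x))\<^sup>2) + 2 * ennreal (cmod (g x) * cmod (h x)) + ennreal ((cmod (h x))\<^sup>2)"
      by (rule ennreal_sum3[symmetric]) auto
    finally show "ennreal ((cmod (g x - h x))\<^sup>2) \<le> ennreal ((cmod (g x))\<^sup>2) + 2 * ennreal (cmod (g x) * cmod (h x)) + ennreal ((cmod (h x))\<^sup>2)" .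
  qed
  also have "\<dots> = (\<integral>\<^sup>+x. ennreal ((cmod (g x))\<^sup>2) \<partial>lborel) + 2 * (\<integral>\<^sup>+x. ennreal (cmod (g x) * cmod (h x)) \<partial>lborel)
       + (\<integral>\<^sup>+x. ennreal ((cmod (h x))\<^sup>2) \<partial>lborel)"
    by (simp add: nn_integral_add nn_integral_cmult)
  also have "\<dots> \<le> ennreal ((L2norm g)\<^sup>2) + 2 * ennreal (L2norm g * L2norm h) + ennreal ((L2norm h)\<^sup>2)"
    using CS_nn[OF g h] by (simp add: L2norm_sq g h add_mono mult_left_mono)
  also have "\<dots> = ennreal ((L2norm g + L2norm h)\<^sup>2)"
    by (subst ennreal_sum3) (auto simp: power2_sum L2norm_nonneg)
  finally have le: "(\<integral>\<^sup>+x. ennreal ((cmod (g x - h x))\<^sup>2) \<partial>lborel) \<le> ennreal ((L2norm g + L2norm h)\<^sup>2)" .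
  show "L2 (\<lambda>x. g x - h x)" "L2norm (\<lambda>x. g x - h x) \<le> L2norm g + L2norm h"
    using L2normI[OF _ _ le] by (auto simp: L2norm_nonneg)
qed

lemma nn_integral_shift:
  fixes F :: "real \<Rightarrow> ennreal"
  assumes [measurable]: "F \<in> borel_measurable borel"
  shows "(\<integral>\<^sup>+x. F (x + t) \<partial>lborel) = (\<integral>\<^sup>+x. F x \<partial>lborel)"
  using nn_integral_real_affine[of F 1 t] by (simp add: add.commute)

lemma integrated_meas[measurable]:
  assumes [measurable]: "\<phi> \<in> borel_measurable borel" "\<psi> \<in> borel_measurable borel"
  shows "integrated \<phi> \<psi> \<in> borel_measurable borel"
proof -
  have "(\<lambda>x. LINT t|lborel. \<phi> t * \<psi> (x + t)) \<in> borel_measurable lborel"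
    by measurable
  then show ?thesis unfolding integrated_def transl_def by simp
qed

lemma young:
  fixes \<phi> \<psi> :: "real \<Rightarrow> complex"
  assumes \<phi>: "integrable lborel \<phi>" and \<psi>: "L2 \<psi>"
  shows "L2 (integrated \<phi> \<psi>)"
    "L2norm (integrated \<phi> \<psi>) \<le> (LINT t|lborel. cmod (\<phi> t)) * L2norm \<psi>"
    "AE x in lborel. integrable lborel (\<lambda>t. \<phi> t * \<psi> (x + t))"
proof -
  have [measurable]: "\<phi> \<in> borel_measurable borel" "\<psi> \<in> borel_measurable borel"
    using \<phi> \<psi> by (auto simp: L2_def)
  define A where "A = (LINT t|lborel. cmod (\<phi> t))"
  have A0: "A \<ge> 0" unfolding A_def by simp
  have eA: "(\<integral>\<^sup>+t. ennreal (cmod (\<phi> t)) \<partial>lborel) = ennreal A"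
    unfolding A_def by (rule nn_integral_eq_integral) (auto intro: integrable_norm \<phi>)
  define N where "N = L2norm \<psi>"
  have N0: "N \<ge> 0" unfolding N_def by (rule L2norm_nonneg)
  have eN: "(\<integral>\<^sup>+x. ennreal ((cmod (\<psi> x))\<^sup>2) \<partial>lborel) = ennreal (N\<^sup>2)"
    unfolding N_def using L2norm_sq[OF \<psi>] by simp
  define h where "h x = (\<integral>\<^sup>+t. ennreal (cmod (\<phi> t) * cmod (\<psi> (x + t))) \<partial>lborel)" for x
  have hm[measurable]: "h \<in> borel_measurable lborel"
    unfolding h_def by measurable
  have hCS: "(h x)\<^sup>2 \<le> ennreal A * (\<integral>\<^sup>+t. ennreal (cmod (\<phi> t) * (cmod (\<psi> (x + t)))\<^sup>2) \<partial>lborel)" for x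
  proof -
    have "(\<integral>\<^sup>+t. ennreal (sqrt (cmod (\<phi> t))) * ennreal (sqrt (cmod (\<phi> t)) * cmod (\<psi> (x + t))) \<partial>lborel)\<^sup>2
      \<le> (\<integral>\<^sup>+t. ennreal (sqrt (cmod (\<phi> t))) ^ 2 \<partial>lborel) *
         (\<integral>\<^sup>+t. ennreal (sqrt (cmod (\<phi> t)) * cmod (\<psi> (x + t))) ^ 2 \<partial>lborel)"
      by (rule Cauchy_Schwarz_nn_integral) auto
    moreover have "\<And>t. ennreal (sqrt (cmod (\<phi> t))) * ennreal (sqrt (cmod (\<phi> t)) * cmod (\<psi> (x + t)))
        = ennreal (cmod (\<phi> t) * cmod (\<psi> (x + t)))"
      by (simp add: ennreal_mult'[symmetric] mult.assoc[symmetric])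
    moreover have "\<And>t. ennreal (sqrt (cmod (\<phi> t))) ^ 2 = ennreal (cmod (\<phi> t))"
      by (simp add: ennreal_power)
    moreover have "\<And>t. ennreal (sqrt (cmod (\<phi> t)) * cmod (\<psi> (x + t))) ^ 2
        = ennreal (cmod (\<phi> t) * (cmod (\<psi> (x + t)))\<^sup>2)"
      by (simp add: ennreal_power power_mult_distrib)
    ultimately show ?thesis unfolding h_def by (simp add: eA)
  qed
  have "(\<integral>\<^sup>+x. (h x)\<^sup>2 \<partial>lborel) \<le>
      (\<integral>\<^sup>+x. ennreal A * (\<integral>\<^sup>+t. ennreal (cmod (\<phi> t) * (cmod (\<psi> (x + t)))\<^sup>2) \<partial>lborel) \<partial>lborel)"
    by (rule nn_integral_mono) (rule hCS)
  also have "\<dots> = ennreal A * (\<integral>\<^sup>+x. (\<integral>\<^sup>+t. ennreal (cmod (\<phi> t) * (cmod (\<psi> (x + t)))\<^sup>2) \<partial>lborel) \<partial>lborel)"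
    by (rule nn_integral_cmult) measurable
  also have "(\<integral>\<^sup>+x. (\<integral>\<^sup>+t. ennreal (cmod (\<phi> t) * (cmod (\<psi> (x + t)))\<^sup>2) \<partial>lborel) \<partial>lborel)
      = (\<integral>\<^sup>+t. (\<integral>\<^sup>+x. ennreal (cmod (\<phi> t) * (cmod (\<psi> (x + t)))\<^sup>2) \<partial>lborel) \<partial>lborel)"
    by (rule lborel_pair.Fubini'[symmetric]) measurable
  also have "\<dots> = (\<integral>\<^sup>+t. ennreal (cmod (\<phi> t)) * ennreal (N\<^sup>2) \<partial>lborel)"
  proof (rule nn_integral_cong)
    fix t
    have "(\<integral>\<^sup>+x. ennreal (cmod (\<phi> t) * (cmod (\<psi> (x + t)))\<^sup>2) \<partial>lborel)
        = ennreal (cmod (\<phi> t)) * (\<integral>\<^sup>+x. ennreal ((cmod (\<psi> (x + t)))\<^sup>2) \<partial>lborel)"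
      by (subst nn_integral_cmult[symmetric]) (auto simp: ennreal_mult')
    also have "(\<integral>\<^sup>+x. ennreal ((cmod (\<psi> (x + t)))\<^sup>2) \<partial>lborel) = ennreal (N\<^sup>2)"
      using nn_integral_shift[of "\<lambda>x. ennreal ((cmod (\<psi> x))\<^sup>2)" t] eN by simp
    finally show "(\<integral>\<^sup>+x. ennreal (cmod (\<phi> t) * (cmod (\<psi> (x + t)))\<^sup>2) \<partial>lborel) = ennreal (cmod (\<phi> t)) * ennreal (N\<^sup>2)" .
  qed
  also have "\<dots> = ennreal A * ennreal (N\<^sup>2)"
    by (subst nn_integral_multc) (auto simp: eA)
  also have "ennreal A * (ennreal A * ennreal (N\<^sup>2)) = ennreal ((A * N)\<^sup>2)"
    using A0 N0 by (simp add: ennreal_mult[symmetric] power_mult_distrib power2_eq_square mult.assoc)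
  finally have hint: "(\<integral>\<^sup>+x. (h x)\<^sup>2 \<partial>lborel) \<le> ennreal ((A * N)\<^sup>2)" .
  have ptw: "ennreal ((cmod (integrated \<phi> \<psi> x))\<^sup>2) \<le> (h x)\<^sup>2" for x
  proof -
    have "ennreal (cmod (integrated \<phi> \<psi> x)) \<le> h x"
    proof (cases "integrable lborel (\<lambda>t. \<phi> t * \<psi> (x + t))")
      case True
      then show ?thesis
        using integral_norm_bound_ennreal[OF True]
        unfolding integrated_def transl_def h_def by (simp add: norm_mult)
    next
      case False
      then show ?thesis
        unfolding integrated_def transl_def h_def by (simp add: not_integrable_integral_eq)
    qed
    then have "ennreal (cmod (integrated \<phi> \<psi> x)) ^ 2 \<le> (h x)\<^sup>2"
      by (rule power_mono_ennreal)
    then show ?thesis by (simp add: ennreal_power)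
  qed
  have le: "(\<integral>\<^sup>+x. ennreal ((cmod (integrated \<phi> \<psi> x))\<^sup>2) \<partial>lborel) \<le> ennreal ((A * N)\<^sup>2)"
    using nn_integral_mono[OF ptw] hint by (rule order_trans)
  show "L2 (integrated \<phi> \<psi>)"
    "L2norm (integrated \<phi> \<psi>) \<le> (LINT t|lborel. cmod (\<phi> t)) * L2norm \<psi>"
    using L2normI[OF _ _ le] A0 N0 unfolding A_def N_def by auto
  have "AE x in lborel. (h x)\<^sup>2 \<noteq> \<infinity>"
    by (rule nn_integral_PInf_AE) (use hint in \<open>auto simp: top_unique\<close>)
  then show "AE x in lborel. integrable lborel (\<lambda>t. \<phi> t * \<psi> (x + t))"
  proof eventually_elim
    case (elim x)
    then have "h x < \<infinity>" by (simp add: less_top power_eq_top_ennreal)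
    then show ?case unfolding integrable_iff_bounded h_def by (simp add: norm_mult)
  qed
qed

lemma L2_zero: "L2 (\<lambda>x. 0)" "L2norm (\<lambda>x. 0) = 0"
  by (auto simp: L2_def L2norm_def)

lemma AE_shift:
  fixes \<psi> \<psi>' :: "real \<Rightarrow> complex"
  assumes [measurable]: "\<psi> \<in> borel_measurable borel" "\<psi>' \<in> borel_measurable borel"
    and ae: "AE y in lborel. \<psi> y = \<psi>' y"
  shows "AE t in lborel. \<psi> (x + t) = \<psi>' (x + t)"
  using AE_borel_affine[of 1 "\<lambda>y. \<psi> y = \<psi>' y" x] ae by simp

lemma bounded_integrated:
  assumes \<phi>: "integrable lborel \<phi>"
  shows "bounded_op (integrated \<phi>)"
  unfolding bounded_op_def
proof (intro conjI allI impI)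
  have [measurable]: "\<phi> \<in> borel_measurable borel" using \<phi> by auto
  show "L2 (integrated \<phi> \<psi>)" if "L2 \<psi>" for \<psi> using young(1)[OF \<phi> that] .
  show "AE x in lborel. integrated \<phi> \<psi> x = integrated \<phi> \<psi>' x"
    if "L2 \<psi>" "L2 \<psi>'" "AE x in lborel. \<psi> x = \<psi>' x" for \<psi> \<psi>'
  proof (rule AE_I2)
    fix x
    have [measurable]: "\<psi> \<in> borel_measurable borel" "\<psi>' \<in> borel_measurable borel"
      using that by (auto simp: L2_def)
    have "AE t in lborel. \<psi> (x + t) = \<psi>' (x + t)"
      by (rule AE_shift) (use that in auto)
    then have "(LINT t|lborel. \<phi> t * \<psi> (x + t)) = (LINT t|lborel. \<phi> t * \<psi>' (x + t))"
      by (intro integral_cong_AE) auto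
    then show "integrated \<phi> \<psi> x = integrated \<phi> \<psi>' x"
      by (simp add: integrated_def transl_def)
  qed
  show "AE x in lborel. integrated \<phi> (\<lambda>y. \<psi> y + c * \<psi>' y) x = integrated \<phi> \<psi> x + c * integrated \<phi> \<psi>' x"
    if "L2 \<psi>" "L2 \<psi>'" for \<psi> \<psi>' c
    using young(3)[OF \<phi> that(1)] young(3)[OF \<phi> that(2)]
  proof eventually_elim
    case (elim x)
    have "integrated \<phi> (\<lambda>y. \<psi> y + c * \<psi>' y) x =
        (LINT t|lborel. \<phi> t * \<psi> (x + t) + c * (\<phi> t * \<psi>' (x + t)))"
      by (simp add: integrated_def transl_def algebra_simps)
    also have "\<dots> = (LINT t|lborel. \<phi> t * \<psi> (x + t)) + c * (LINT t|lborel. \<phi> t * \<psi>' (x + t))"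
      using elim by (simp add: integral_add)
    finally show ?case by (simp add: integrated_def transl_def)
  qed
  show "\<exists>C. \<forall>\<psi>. L2 \<psi> \<longrightarrow> L2norm (integrated \<phi> \<psi>) \<le> C * L2norm \<psi>"
    using young(2)[OF \<phi>] by blast
qed

lemma integrated_UL:
  assumes \<phi>: "integrable lborel \<phi>"
  shows "integrated \<phi> \<in> UL"
proof -
  have "{L2norm (\<lambda>x. integrated \<phi> \<psi> x - integrated \<phi> \<psi> x) | \<psi>. L2 \<psi> \<and> L2norm \<psi> \<le> 1} = {0}"
    using L2_zero by (auto intro!: exI[of _ "\<lambda>x. 0"])
  then have "op_dist (integrated \<phi>) (integrated \<phi>) = 0"
    unfolding op_dist_def by simp
  then show ?thesis
    unfolding UL_def using bounded_integrated[OF \<phi>] \<phi> by auto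
qed

lemma integrable_shift:
  fixes g :: "real \<Rightarrow> 'a::{banach, second_countable_topology}"
  assumes "integrable lborel g"
  shows "integrable lborel (\<lambda>t. g (t + s))" "(LINT t|lborel. g (t + s)) = (LINT t|lborel. g t)"
proof -
  show "integrable lborel (\<lambda>t. g (t + s))"
    using lborel_integrable_real_affine[OF assms, of 1 s] by (simp add: add.commute)
  show "(LINT t|lborel. g (t + s)) = (LINT t|lborel. g t)"
    using lborel_integral_real_affine[of 1 g s] by (simp add: add.commute)
qed

lemma compact_inner:
  fixes A :: "real set"
  assumes A: "A \<in> sets borel" "emeasure lborel A < \<infinity>" and e: "e > 0"
  shows "\<exists>K. compact K \<and> K \<subseteq> A \<and> measure lborel A - measure lborel K < e"
proof (rule ccontr)
  assume H: "\<not> ?thesis"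
  define M where "M = density lborel (indicator A)"
  have sM: "sets M = sets borel" unfolding M_def by simp
  have eM: "emeasure M X = emeasure lborel (A \<inter> X)" if "X \<in> sets borel" for X
    using that A unfolding M_def
    by (auto simp: emeasure_density borel_measurable_indicator indicator_inter_arith[symmetric])
  have fin: "emeasure M (space M) \<noteq> \<infinity>"
    using eM[of UNIV] A by (simp add: M_def)
  have "emeasure M A = (SUP K \<in> {K. K \<subseteq> A \<and> compact K}. emeasure M K)"
    by (rule inner_regular[OF sM fin A(1)])
  also have "\<dots> = (SUP K \<in> {K. K \<subseteq> A \<and> compact K}. emeasure lborel K)"
    by (intro SUP_cong refl) (auto simp: eM compact_imp_closed borel_closed Int_absorb1)
  finally have eq: "emeasure lborel A = (SUP K \<in> {K. K \<subseteq> A \<and> compact K}. emeasure lborel K)"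
    using eM[OF A(1)] by simp
  have le: "measure lborel K \<le> measure lborel A - e" if "compact K" "K \<subseteq> A" for K
  proof (rule ccontr)
    assume "\<not> measure lborel K \<le> measure lborel A - e"
    then have "measure lborel A - measure lborel K < e" by simp
    with H that show False by blast
  qed
  from le[of "{}"] have pos: "measure lborel A - e \<ge> 0" by simp
  have "(SUP K \<in> {K. K \<subseteq> A \<and> compact K}. emeasure lborel K) \<le> ennreal (measure lborel A - e)"
  proof (rule SUP_least)
    fix K assume "K \<in> {K. K \<subseteq> A \<and> compact K}"
    then have K: "K \<subseteq> A" "compact K" by auto
    have "emeasure lborel K = ennreal (measure lborel K)"
      using emeasure_compact_finite[OF K(2)] by (simp add: emeasure_eq_ennreal_measure less_top)
    also have "\<dots> \<le> ennreal (measure lborel A - e)"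
      using le[OF K(2) K(1)] by (rule ennreal_leI)
    finally show "emeasure lborel K \<le> ennreal (measure lborel A - e)" .
  qed
  moreover have mA: "emeasure lborel A = ennreal (measure lborel A)"
    using A(2) by (intro emeasure_eq_ennreal_measure) auto
  ultimately have "ennreal (measure lborel A) \<le> ennreal (measure lborel A - e)"
    using eq by simp
  then have "measure lborel A \<le> measure lborel A - e"
    using pos by (simp add: ennreal_le_iff)
  with e show False by simp
qed

lemma set_shift:
  fixes A :: "real set"
  assumes A: "A \<in> sets borel" "emeasure lborel A < \<infinity>" and e: "e > 0"
  shows "\<exists>d>0. \<forall>s. \<bar>s\<bar> < d \<longrightarrow>
     (LINT t|lborel. \<bar>indicator A (t + s) - indicator A t :: real\<bar>) < e"
proof -
  have e4: "e / 4 > 0" using e by simp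
  obtain K where K: "compact K" "K \<subseteq> A" "measure lborel A - measure lborel K < e / 4"
    using compact_inner[OF A e4] by blast
  obtain U where U: "open U" "A \<subseteq> U" "emeasure lborel (U - A) < ennreal (e / 4)"
    using outer_regular_lborel[OF A(1) e4] by blast
  have Kb[measurable]: "K \<in> sets borel" using K(1) by (simp add: borel_compact)
  have Ub[measurable]: "U \<in> sets borel" using U(1) by simp
  have AKm[measurable]: "A - K \<in> sets borel" "U - A \<in> sets borel" using A by auto
  have finAK: "emeasure lborel (A - K) < \<infinity>"
    using A(2) le_less_trans[OF emeasure_mono[of "A - K" A lborel]] A(1) by auto
  have finUA: "emeasure lborel (U - A) < \<infinity>" using order.strict_trans[OF U(3) ennreal_less_top] by simp
  have mAK: "measure lborel (A - K) < e / 4"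
    using K A by (simp add: measure_Diff less_top emeasure_compact_finite)
  have mUA: "measure lborel (U - A) < e / 4"
    using U(3) finUA e by (simp add: emeasure_eq_ennreal_measure less_top ennreal_less_iff)
  obtain d where d: "d > 0" "\<And>x y. x \<in> K \<Longrightarrow> y \<in> -U \<Longrightarrow> d \<le> dist x y"
  proof -
    have "K \<inter> - U = {}" using U K(2) by auto
    then obtain d where "d > 0" "\<forall>x\<in>K. \<forall>y\<in>- U. d \<le> dist x y"
      using separate_compact_closed[OF K(1), of "-U"] U(1) by (auto simp: closed_Compl)
    then show ?thesis using that by blast
  qed
  have near: "y \<in> U" if "x \<in> K" "dist x y < d" for x y
    using d(2)[OF that(1), of y] that by force
  have main: "(LINT t|lborel. \<bar>indicator A (t + s) - indicator A t :: real\<bar>) < e"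
    if s: "\<bar>s\<bar> < d" for s :: real
  proof -
    define R where "R t = indicator (A - K) (t + s) + indicator (U - A) t + indicator (A - K) t
       + (indicator (U - A) (t + s) :: real)" for t :: real
    have ptw: "\<bar>indicator A (t + s) - indicator A t :: real\<bar> \<le> R t" for t
    proof -
      have dd: "dist (t + s) t < d" "dist t (t + s) < d" using s by (auto simp: dist_real_def)
      show ?thesis
        using near[OF _ dd(1)] near[OF _ dd(2)]
        by (cases "t + s \<in> A"; cases "t \<in> A"; cases "t + s \<in> K"; cases "t \<in> K")
           (auto simp: R_def indicator_def)
    qed
    have iAK: "integrable lborel (indicator (A - K) :: real \<Rightarrow> real)"
      using finAK by simp
    have iUA: "integrable lborel (indicator (U - A) :: real \<Rightarrow> real)"
      using finUA by simp
    have iR: "integrable lborel R"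
      unfolding R_def using iAK iUA integrable_shift(1)[OF iAK, of s] integrable_shift(1)[OF iUA, of s]
      by (intro Bochner_Integration.integrable_add) auto
    have iA: "integrable lborel (indicator A :: real \<Rightarrow> real)" using A by simp
    have iL: "integrable lborel (\<lambda>t. \<bar>indicator A (t + s) - indicator A t :: real\<bar>)"
      using integrable_shift(1)[OF iA, of s] iA by (intro integrable_abs integrable_diff) auto
    have "(LINT t|lborel. \<bar>indicator A (t + s) - indicator A t :: real\<bar>) \<le> (LINT t|lborel. R t)"
      by (rule integral_mono[OF iL iR ptw])
    also have "(LINT t|lborel. R t) = 2 * measure lborel (A - K) + 2 * measure lborel (U - A)"
      unfolding R_def using iAK iUA integrable_shift[OF iAK, of s] integrable_shift[OF iUA, of s]
      by (simp add: Bochner_Integration.integral_add)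
    also have "\<dots> < e" using mAK mUA by simp
    finally show "(LINT t|lborel. \<bar>indicator A (t + s) - indicator A t :: real\<bar>) < e" .
  qed
  show ?thesis using d(1) main by blast
qed

lemma int_shift_diff:
  fixes f :: "real \<Rightarrow> complex"
  assumes "integrable lborel f"
  shows "integrable lborel (\<lambda>t. cmod (f (t + s) - f t))"
  using integrable_shift(1)[OF assms, of s] assms
  by (intro integrable_norm Bochner_Integration.integrable_diff) auto

lemma transl_cont:
  fixes \<phi> :: "real \<Rightarrow> complex"
  assumes "integrable lborel \<phi>"
  shows "\<forall>e>0. \<exists>d>0. \<forall>s. \<bar>s\<bar> < d \<longrightarrow> (LINT t|lborel. cmod (\<phi> (t + s) - \<phi> t)) < e"
  using assms
proof (induct rule: integrable_induct)
  case (base A c)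
  show ?case
  proof (intro allI impI)
    fix e :: real assume e: "e > 0"
    show "\<exists>d>0. \<forall>s. \<bar>s\<bar> < d \<longrightarrow>
        (LINT t|lborel. cmod (indicator A (t + s) *\<^sub>R c - indicator A t *\<^sub>R c)) < e"
    proof (cases "c = 0")
      case True
      then show ?thesis using e by (intro exI[of _ 1]) auto
    next
      case False
      then have cp: "cmod c > 0" by simp
      obtain d where d: "d > 0" "\<And>s. \<bar>s\<bar> < d \<Longrightarrow>
          (LINT t|lborel. \<bar>indicator A (t + s) - indicator A t :: real\<bar>) < e / cmod c"
        using set_shift[of A "e / cmod c"] base e cp by auto
      have eq: "cmod (indicator A (t + s) *\<^sub>R c - indicator A t *\<^sub>R c) =
          \<bar>indicator A (t + s) - indicator A t :: real\<bar> * cmod c" for t s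
        by (simp only: scaleR_left_diff_distrib[symmetric] norm_scaleR)
      have "(LINT t|lborel. cmod (indicator A (t + s) *\<^sub>R c - indicator A t *\<^sub>R c)) < e"
        if "\<bar>s\<bar> < d" for s
        using d(2)[OF that] cp by (simp add: eq pos_less_divide_eq)
      then show ?thesis using d(1) by blast
    qed
  qed
next
  case (add f g)
  show ?case
  proof (intro allI impI)
    fix e :: real assume e: "e > 0"
    obtain d1 where d1: "d1 > 0" "\<And>s. \<bar>s\<bar> < d1 \<Longrightarrow> (LINT t|lborel. cmod (f (t + s) - f t)) < e / 2"
      using add(2) e half_gt_zero by blast
    obtain d2 where d2: "d2 > 0" "\<And>s. \<bar>s\<bar> < d2 \<Longrightarrow> (LINT t|lborel. cmod (g (t + s) - g t)) < e / 2"
      using add(4) e half_gt_zero by blast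
    have "(LINT t|lborel. cmod ((f (t + s) + g (t + s)) - (f t + g t))) < e"
      if s: "\<bar>s\<bar> < min d1 d2" for s
    proof -
      note int_shift = integrable_shift(1)[OF add(1), of s] integrable_shift(1)[OF add(3), of s]
      have "(LINT t|lborel. cmod ((f (t + s) + g (t + s)) - (f t + g t))) \<le>
          (LINT t|lborel. cmod (f (t + s) - f t) + cmod (g (t + s) - g t))"
      proof (rule integral_mono)
        have "integrable lborel (\<lambda>t. f (t + s) + g (t + s))"
          using integrable_shift(1)[OF add(1), of s] integrable_shift(1)[OF add(3), of s]
          by (intro Bochner_Integration.integrable_add)
        then show "integrable lborel (\<lambda>t. cmod ((f (t + s) + g (t + s)) - (f t + g t)))"
          using add(1,3) int_shift by (intro integrable_norm Bochner_Integration.integrable_diff Bochner_Integration.integrable_add) auto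
        show "integrable lborel (\<lambda>t. cmod (f (t + s) - f t) + cmod (g (t + s) - g t))"
          using int_shift_diff[OF add(1)] int_shift_diff[OF add(3)]
          by (intro Bochner_Integration.integrable_add)
        show "cmod ((f (t + s) + g (t + s)) - (f t + g t)) \<le> cmod (f (t + s) - f t) + cmod (g (t + s) - g t)" for t
        proof -
          have "(f (t + s) + g (t + s)) - (f t + g t) = (f (t + s) - f t) + (g (t + s) - g t)" by simp
          then show ?thesis by (simp only: norm_triangle_ineq)
        qed
      qed
      also have "\<dots> = (LINT t|lborel. cmod (f (t + s) - f t)) + (LINT t|lborel. cmod (g (t + s) - g t))"
        using int_shift_diff[OF add(1)] int_shift_diff[OF add(3)]
        by (simp add: Bochner_Integration.integral_add)
      also have "\<dots> < e" using d1(2)[of s] d2(2)[of s] s by simp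
      finally show ?thesis .
    qed
    then show "\<exists>d>0. \<forall>s. \<bar>s\<bar> < d \<longrightarrow> (LINT t|lborel. cmod ((f (t + s) + g (t + s)) - (f t + g t))) < e"
      using d1(1) d2(1) by (intro exI[of _ "min d1 d2"]) auto
  qed
next
  case (lim f u)
  have fm[measurable]: "f \<in> borel_measurable lborel" using lim(5) by auto
  have um[measurable]: "u i \<in> borel_measurable lborel" for i using lim(1)[of i] by auto
  have w: "integrable lborel (\<lambda>x. 3 * cmod (f x))" using lim(5) by auto
  have ae1: "AE x in lborel. (\<lambda>i. cmod (u i x - f x)) \<longlonglongrightarrow> 0"
    using lim(3) by (intro AE_I2 tendsto_norm_zero LIM_zero) auto
  have ae2: "AE x in lborel. norm (cmod (u i x - f x)) \<le> 3 * cmod (f x)" for i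
  proof (intro AE_I2)
    fix x
    have "cmod (u i x - f x) \<le> cmod (u i x) + cmod (f x)" by (rule norm_triangle_ineq4)
    then show "norm (cmod (u i x - f x)) \<le> 3 * cmod (f x)" using lim(4)[of x i] by simp
  qed
  have conv: "(\<lambda>i. LINT x|lborel. cmod (u i x - f x)) \<longlonglongrightarrow> (LINT x|lborel. (0::real))"
    using Bochner_Integration.integral_dominated_convergence[of "\<lambda>x. 0::real" lborel "\<lambda>i x. cmod (u i x - f x)" "\<lambda>x. 3 * cmod (f x)", OF _ _ w ae1 ae2]
    by auto
  show ?case
  proof (intro allI impI)
    fix e :: real assume e: "e > 0"
    then have e3: "e / 3 > 0" by simp
    from conv have "\<forall>\<^sub>F i in sequentially. (LINT x|lborel. cmod (u i x - f x)) < e / 3"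
      using order_tendstoD(2)[OF conv[simplified], of "e/3"] e3 by simp
    then obtain N where "\<forall>n\<ge>N. (LINT x|lborel. cmod (u n x - f x)) < e / 3"
      by (auto simp: eventually_sequentially)
    then obtain i where i: "(LINT x|lborel. cmod (u i x - f x)) < e / 3" by blast
    obtain d where d: "d > 0" "\<And>s. \<bar>s\<bar> < d \<Longrightarrow> (LINT t|lborel. cmod (u i (t + s) - u i t)) < e / 3"
      using lim(2)[of i] e3 by blast
    have ig: "integrable lborel (\<lambda>x. cmod (u i x - f x))"
      using lim(1)[of i] lim(5) by (intro integrable_norm Bochner_Integration.integrable_diff)
    have "(LINT t|lborel. cmod (f (t + s) - f t)) < e" if s: "\<bar>s\<bar> < d" for s
    proof -
      have "(LINT t|lborel. cmod (f (t + s) - f t)) \<le>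
          (LINT t|lborel. cmod (u i (t + s) - f (t + s)) + cmod (u i (t + s) - u i t) + cmod (u i t - f t))"
      proof (rule integral_mono)
        show "integrable lborel (\<lambda>t. cmod (f (t + s) - f t))" by (rule int_shift_diff[OF lim(5)])
        show "integrable lborel (\<lambda>t. cmod (u i (t + s) - f (t + s)) + cmod (u i (t + s) - u i t) + cmod (u i t - f t))"
          using integrable_shift(1)[OF ig, of s] int_shift_diff[OF lim(1)[of i], of s] ig
          by (intro Bochner_Integration.integrable_add) auto
        show "cmod (f (t + s) - f t) \<le> cmod (u i (t + s) - f (t + s)) + cmod (u i (t + s) - u i t) + cmod (u i t - f t)" for t
        proof -
          have "f (t + s) - f t = (f (t + s) - u i (t + s) + (u i (t + s) - u i t)) + (u i t - f t)"
            by simp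
          then have "cmod (f (t + s) - f t) \<le> cmod (f (t + s) - u i (t + s) + (u i (t + s) - u i t)) + cmod (u i t - f t)"
            by (simp only: norm_triangle_ineq)
          also have "\<dots> \<le> cmod (f (t + s) - u i (t + s)) + cmod (u i (t + s) - u i t) + cmod (u i t - f t)"
            by (simp only: add_right_mono norm_triangle_ineq)
          finally show ?thesis by (simp add: norm_minus_commute)
        qed
      qed
      also have "\<dots> = (LINT t|lborel. cmod (u i (t + s) - f (t + s))) + (LINT t|lborel. cmod (u i (t + s) - u i t))
          + (LINT t|lborel. cmod (u i t - f t))"
        using integrable_shift(1)[OF ig, of s] int_shift_diff[OF lim(1)[of i], of s] ig
        by (simp add: Bochner_Integration.integral_add)
      also have "(LINT t|lborel. cmod (u i (t + s) - f (t + s))) = (LINT t|lborel. cmod (u i t - f t))"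
        using integrable_shift(2)[OF ig, of s] by simp
      also have "(LINT t|lborel. cmod (u i t - f t)) + (LINT t|lborel. cmod (u i (t + s) - u i t))
          + (LINT t|lborel. cmod (u i t - f t)) < e"
        using i d(2)[OF s] by simp
      finally show ?thesis .
    qed
    then show "\<exists>d>0. \<forall>s. \<bar>s\<bar> < d \<longrightarrow> (LINT t|lborel. cmod (f (t + s) - f t)) < e"
      using d(1) by blast
  qed
qed

lemma cis_minus_one: "cmod (cis \<theta> - 1) \<le> \<bar>\<theta>\<bar>"
proof -
  have "(cmod (cis \<theta> - 1))\<^sup>2 = (cos \<theta> - 1)\<^sup>2 + (sin \<theta>)\<^sup>2"
    by (simp add: cmod_power2)
  also have "\<dots> = 2 - 2 * cos \<theta>"
    using sin_cos_squared_add[of \<theta>] by (simp add: power2_diff algebra_simps)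
  also have "cos \<theta> = 1 - 2 * (sin (\<theta> / 2))\<^sup>2"
    using cos_double_sin[of "\<theta> / 2"] by simp
  also have "2 - 2 * (1 - 2 * (sin (\<theta> / 2))\<^sup>2) = 4 * (sin (\<theta> / 2))\<^sup>2" by simp
  also have "\<dots> \<le> 4 * (\<theta> / 2)\<^sup>2"
  proof -
    have "(sin (\<theta> / 2))\<^sup>2 \<le> (\<theta> / 2)\<^sup>2"
      using abs_sin_x_le_abs_x[of "\<theta> / 2"] by (simp only: abs_le_square_iff)
    then show ?thesis by simp
  qed
  also have "\<dots> = \<bar>\<theta>\<bar>\<^sup>2" by (simp add: power2_eq_square)
  finally show ?thesis
    using abs_ge_zero power2_le_imp_le by blast
qed

lemma integral_shift_any:
  fixes g :: "real \<Rightarrow> 'a::{banach, second_countable_topology}"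
  shows "(LINT t|lborel. g (t + s)) = (LINT t|lborel. g t)"
  using lborel_integral_real_affine[of 1 g s] by (simp add: add.commute)

lemma L2_shift:
  assumes "L2 \<eta>"
  shows "L2 (\<lambda>x. \<eta> (x + t))" "L2norm (\<lambda>x. \<eta> (x + t)) = L2norm \<eta>"
proof -
  have [measurable]: "\<eta> \<in> borel_measurable borel" using assms by (simp add: L2_def)
  have eq: "(\<integral>\<^sup>+x. ennreal ((cmod (\<eta> (x + t)))\<^sup>2) \<partial>lborel) = (\<integral>\<^sup>+x. ennreal ((cmod (\<eta> x))\<^sup>2) \<partial>lborel)"
    by (rule nn_integral_shift[of "\<lambda>x. ennreal ((cmod (\<eta> x))\<^sup>2)"]) measurable
  show "L2 (\<lambda>x. \<eta> (x + t))" using assms eq unfolding L2_iff by simp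
  show "L2norm (\<lambda>x. \<eta> (x + t)) = L2norm \<eta>"
    by (subst (1 2) L2norm_nn) (use eq in auto)
qed

lemma L2_support:
  fixes g :: "real \<Rightarrow> complex"
  assumes [measurable]: "g \<in> borel_measurable borel" and ab: "a \<le> b" and M: "M \<ge> 0"
    and le: "\<And>x. cmod (g x) \<le> M * indicator {a..b} x"
  shows "L2 g" "L2norm g \<le> M * sqrt (b - a)"
proof -
  have "(\<integral>\<^sup>+x. ennreal ((cmod (g x))\<^sup>2) \<partial>lborel) \<le> (\<integral>\<^sup>+x. ennreal (M\<^sup>2) * indicator {a..b} x \<partial>lborel)"
  proof (rule nn_integral_mono)
    fix x
    have "(cmod (g x))\<^sup>2 \<le> (M * indicator {a..b} x)\<^sup>2"
      using le[of x] by (intro power_mono) auto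
    then show "ennreal ((cmod (g x))\<^sup>2) \<le> ennreal (M\<^sup>2) * indicator {a..b} x"
      by (auto simp: indicator_def)
  qed
  also have "\<dots> = ennreal (M\<^sup>2) * ennreal (b - a)"
    using ab by (simp add: nn_integral_cmult)
  also have "\<dots> = ennreal ((M * sqrt (b - a))\<^sup>2)"
    using ab M by (simp add: ennreal_mult[symmetric] power_mult_distrib)
  finally have le2: "(\<integral>\<^sup>+x. ennreal ((cmod (g x))\<^sup>2) \<partial>lborel) \<le> ennreal ((M * sqrt (b - a))\<^sup>2)" .
  show "L2 g" "L2norm g \<le> M * sqrt (b - a)"
    using L2normI[OF _ _ le2] M ab by auto
qed

lemma CSI:
  assumes "L2 \<eta>" "a \<le> b"
  shows "(\<integral>\<^sup>+x. ennreal (cmod (\<eta> (x + t)) * indicator {a..b} x) \<partial>lborel) \<le> ennreal (L2norm \<eta> * sqrt (b - a))"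
proof -
  define h where "h x = complex_of_real (indicator {a..b} x)" for x
  have hm: "h \<in> borel_measurable borel" unfolding h_def by measurable
  have hle: "cmod (h x) \<le> 1 * indicator {a..b} x" for x by (simp add: h_def indicator_def)
  note hL2 = L2_support[OF hm assms(2) _ hle]
  have "(\<integral>\<^sup>+x. ennreal (cmod (\<eta> (x + t)) * indicator {a..b} x) \<partial>lborel)
      = (\<integral>\<^sup>+x. ennreal (cmod (\<eta> (x + t)) * cmod (h x)) \<partial>lborel)"
    by (simp add: h_def)
  also have "\<dots> \<le> ennreal (L2norm (\<lambda>x. \<eta> (x + t)) * L2norm h)"
    by (rule CS_nn[OF L2_shift(1)[OF assms(1)] hL2(1)]) simp
  also have "\<dots> \<le> ennreal (L2norm \<eta> * sqrt (b - a))"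
    using hL2(2) L2_shift(2)[OF assms(1), of t]
    by (intro ennreal_leI) (simp add: L2norm_nonneg mult_left_mono)
  finally show ?thesis .
qed

lemma KB:
  fixes g k :: "real \<Rightarrow> complex"
  assumes [measurable]: "g \<in> borel_measurable borel" "k \<in> borel_measurable borel"
    and le: "\<And>x. cmod (k x) \<le> K x" and r: "r \<ge> 0"
    and int: "(\<integral>\<^sup>+x. ennreal (cmod (g x) * K x) \<partial>lborel) \<le> ennreal r"
  shows "cmod (LINT x|lborel. g x * k x) \<le> r"
proof (cases "integrable lborel (\<lambda>x. g x * k x)")
  case True
  have "ennreal (cmod (LINT x|lborel. g x * k x)) \<le> (\<integral>\<^sup>+x. ennreal (cmod (g x * k x)) \<partial>lborel)"
    using integral_norm_bound_ennreal[OF True] by simp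
  also have "\<dots> \<le> (\<integral>\<^sup>+x. ennreal (cmod (g x) * K x) \<partial>lborel)"
    by (intro nn_integral_mono ennreal_leI) (auto simp: norm_mult intro: mult_left_mono le)
  also have "\<dots> \<le> ennreal r" by (rule int)
  finally show ?thesis using r by simp
next
  case False
  then show ?thesis using r by (simp add: not_integrable_integral_eq)
qed

definition chi :: "real \<Rightarrow> real \<Rightarrow> complex" where
  "chi a y = cis (y\<^sup>2) * indicator {a..a+1} y"

lemma cis_meas[measurable]:
  assumes [measurable]: "f \<in> borel_measurable M"
  shows "(\<lambda>x. cis (f x)) \<in> borel_measurable M"
proof -
  have "cis \<in> borel_measurable borel"
    by (rule borel_measurable_continuous_onI) (simp add: cis_conv_exp continuous_intros)
  then show ?thesis by measurable
qed

lemma chi_meas[measurable]: "chi a \<in> borel_measurable borel"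
  unfolding chi_def by measurable

lemma chi_norm: "cmod (chi a y) = indicator {a..a+1} y"
  by (simp add: chi_def indicator_def)

lemma KP:
  assumes s: "0 < s" "s \<le> 1" and a: "2 * a * s = pi"
  shows "cmod (cnj (chi a (y - s)) + cnj (chi a y)) \<le>
     3 * s * indicator {a..a+1} y + indicator {a..a+s} y + indicator {a+1..a+1+s} y"
proof -
  have eq: "cmod (cnj (chi a (y - s)) + cnj (chi a y)) = cmod (chi a (y - s) + chi a y)"
    by (metis complex_cnj_add complex_mod_cnj)
  consider (both) "y \<in> {a..a+1}" "y - s \<in> {a..a+1}"
    | (one) "y \<in> {a..a+1}" "y - s \<notin> {a..a+1}"
    | (two) "y \<notin> {a..a+1}" "y - s \<in> {a..a+1}"
    | (none) "y \<notin> {a..a+1}" "y - s \<notin> {a..a+1}" by blast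
  then show ?thesis
  proof cases
    case both
    define \<theta> where "\<theta> = s\<^sup>2 - 2 * (y - a) * s"
    have "(y - s)\<^sup>2 = y\<^sup>2 + \<theta> - pi"
      unfolding \<theta>_def a[symmetric] by (simp add: power2_diff algebra_simps)
    then have c1: "cis ((y - s)\<^sup>2) = cis (y\<^sup>2) * cis \<theta> * cis (- pi)"
      by (simp add: cis_mult)
    have c2: "cis (- pi) = -1" by (simp add: complex_eq_iff)
    have "chi a (y - s) + chi a y = cis (y\<^sup>2) * (1 - cis \<theta>)"
      using both by (simp add: chi_def c1 c2 algebra_simps)
    then have "cmod (chi a (y - s) + chi a y) = cmod (cis \<theta> - 1)"
      by (simp add: norm_mult norm_minus_commute)
    also have "\<dots> \<le> \<bar>\<theta>\<bar>" by (rule cis_minus_one)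
    also have "\<dots> \<le> 3 * s"
    proof -
      have "0 \<le> y - a" "y - a \<le> 1" using both by auto
      then have "0 \<le> 2 * (y - a) * s" "2 * (y - a) * s \<le> 2 * s" using s by (auto simp: mult_left_le)
      moreover have "s\<^sup>2 \<le> s" using s by (simp add: power2_eq_square mult_left_le)
      moreover have "0 \<le> s\<^sup>2" by simp
      ultimately show ?thesis unfolding \<theta>_def by linarith
    qed
    finally show ?thesis using eq both s by (simp add: indicator_def)
  next
    case one
    then have "y \<in> {a..a+s}" using s by auto
    then show ?thesis using eq one s by (simp add: chi_def indicator_def)
  next
    case two
    then have "y \<in> {a+1..a+1+s}" using s by auto
    then show ?thesis using eq two s by (simp add: chi_def indicator_def)
  next
    case none
    then show ?thesis using eq s by (simp add: chi_def indicator_def)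
  qed
qed

lemma ennreal3:
  assumes "c \<ge> 0" "x \<ge> 0" "y \<ge> 0" "z \<ge> 0"
  shows "ennreal (c * x + y + z) = ennreal c * ennreal x + ennreal y + ennreal z"
  using assms by (simp add: ennreal_plus ennreal_mult)

lemma G_bound:
  assumes \<eta>: "L2 \<eta>" "L2norm \<eta> \<le> 1"
  shows "cmod (LINT x|lborel. \<eta> (x + t) * cnj (chi a x)) \<le> 1"
proof (rule KB[where K="indicator {a..a+1}"])
  have [measurable]: "\<eta> \<in> borel_measurable borel" using \<eta> by (simp add: L2_def)
  show "(\<lambda>x. \<eta> (x + t)) \<in> borel_measurable borel" by measurable
  show "(\<lambda>x. cnj (chi a x)) \<in> borel_measurable borel" by measurable
  show "cmod (cnj (chi a x)) \<le> indicator {a..a+1} x" for x by (simp add: chi_norm)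
  have "(\<integral>\<^sup>+x. ennreal (cmod (\<eta> (x + t)) * indicator {a..a+1} x) \<partial>lborel) \<le> ennreal (L2norm \<eta> * sqrt (a + 1 - a))"
    by (rule CSI[OF \<eta>(1)]) simp
  also have "\<dots> \<le> ennreal 1" using \<eta>(2) by (intro ennreal_leI) simp
  finally show "(\<integral>\<^sup>+x. ennreal (cmod (\<eta> (x + t)) * indicator {a..a+1} x) \<partial>lborel) \<le> ennreal 1" .
qed simp

lemma Gsum_bound:
  assumes \<eta>: "L2 \<eta>" "L2norm \<eta> \<le> 1"
    and s: "0 < s" "s \<le> 1" and a: "2 * a * s = pi"
  shows "cmod ((LINT x|lborel. \<eta> (x + (t + s)) * cnj (chi a x)) + (LINT x|lborel. \<eta> (x + t) * cnj (chi a x)))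
     \<le> 3 * s + 2 * sqrt s"
proof -
  have [measurable]: "\<eta> \<in> borel_measurable borel" using \<eta> by (simp add: L2_def)
  have e1: "(LINT x|lborel. \<eta> (x + (t + s)) * cnj (chi a x)) = (LINT y|lborel. \<eta> (y + t) * cnj (chi a (y - s)))"
    using integral_shift_any[of "\<lambda>y. \<eta> (y + t) * cnj (chi a (y - s))" s] by (simp add: add_ac)
  have L2c: "L2 (\<lambda>y. chi a (y - s))"
    by (rule L2_support(1)[where a="a+s" and b="a+1+s" and M=1]) (auto simp: chi_norm indicator_def)
  have L2c0: "L2 (chi a)"
    by (rule L2_support(1)[where a="a" and b="a+1" and M=1]) (auto simp: chi_norm indicator_def)
  have i1: "integrable lborel (\<lambda>y. \<eta> (y + t) * cnj (chi a (y - s)))"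
    using CS(1)[OF L2_shift(1)[OF \<eta>(1)] L2c] .
  have i2: "integrable lborel (\<lambda>y. \<eta> (y + t) * cnj (chi a y))"
    using CS(1)[OF L2_shift(1)[OF \<eta>(1)] L2c0] .
  have e2: "(LINT y|lborel. \<eta> (y + t) * cnj (chi a (y - s))) + (LINT x|lborel. \<eta> (x + t) * cnj (chi a x))
      = (LINT y|lborel. \<eta> (y + t) * (cnj (chi a (y - s)) + cnj (chi a y)))"
    using Bochner_Integration.integral_add[OF i1 i2] by (simp add: distrib_left)
  define K where "K y = 3 * s * indicator {a..a+1} y + indicator {a..a+s} y + indicator {a+1..a+1+s} y" for y :: real
  have "cmod (LINT y|lborel. \<eta> (y + t) * (cnj (chi a (y - s)) + cnj (chi a y))) \<le> 3 * s + 2 * sqrt s"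
  proof (rule KB[where K=K])
    show "(\<lambda>x. \<eta> (x + t)) \<in> borel_measurable borel" by measurable
    show "(\<lambda>y. cnj (chi a (y - s)) + cnj (chi a y)) \<in> borel_measurable borel" by measurable
    show "cmod (cnj (chi a (y - s)) + cnj (chi a y)) \<le> K y" for y
      unfolding K_def by (rule KP[OF s a])
    show "0 \<le> 3 * s + 2 * sqrt s" using s by simp
    have pt: "ennreal (cmod (\<eta> (y + t)) * K y) =
       ennreal (3 * s) * ennreal (cmod (\<eta> (y + t)) * indicator {a..a+1} y)
       + ennreal (cmod (\<eta> (y + t)) * indicator {a..a+s} y)
       + ennreal (cmod (\<eta> (y + t)) * indicator {a+1..a+1+s} y)" for y
    proof -
      have "cmod (\<eta> (y + t)) * K y = 3 * s * (cmod (\<eta> (y + t)) * indicator {a..a+1} y)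
         + cmod (\<eta> (y + t)) * indicator {a..a+s} y + cmod (\<eta> (y + t)) * indicator {a+1..a+1+s} y"
        unfolding K_def by (simp add: algebra_simps)
      then show ?thesis using s by (simp only: ennreal3) (simp add: ennreal_mult)
    qed
    have b1: "(\<integral>\<^sup>+y. ennreal (cmod (\<eta> (y + t)) * indicator {a..a+1} y) \<partial>lborel) \<le> ennreal 1"
    proof -
      have "(\<integral>\<^sup>+y. ennreal (cmod (\<eta> (y + t)) * indicator {a..a+1} y) \<partial>lborel) \<le> ennreal (L2norm \<eta> * sqrt (a + 1 - a))"
        by (rule CSI[OF \<eta>(1)]) simp
      also have "\<dots> \<le> ennreal 1" using \<eta>(2) by (intro ennreal_leI) simp
      finally show ?thesis .
    qed
    have b2: "(\<integral>\<^sup>+y. ennreal (cmod (\<eta> (y + t)) * indicator {a..a+s} y) \<partial>lborel) \<le> ennreal (sqrt s)"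
    proof -
      have "(\<integral>\<^sup>+y. ennreal (cmod (\<eta> (y + t)) * indicator {a..a+s} y) \<partial>lborel) \<le> ennreal (L2norm \<eta> * sqrt (a + s - a))"
        using CSI[OF \<eta>(1), of a "a+s" t] s by simp
      also have "\<dots> \<le> ennreal (sqrt s)" using \<eta>(2) s by (intro ennreal_leI) (simp add: mult_left_le_one_le)
      finally show ?thesis .
    qed
    have b3: "(\<integral>\<^sup>+y. ennreal (cmod (\<eta> (y + t)) * indicator {a+1..a+1+s} y) \<partial>lborel) \<le> ennreal (sqrt s)"
    proof -
      have "(\<integral>\<^sup>+y. ennreal (cmod (\<eta> (y + t)) * indicator {a+1..a+1+s} y) \<partial>lborel) \<le> ennreal (L2norm \<eta> * sqrt (a + 1 + s - (a + 1)))"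
        using CSI[OF \<eta>(1), of "a+1" "a+1+s" t] s by simp
      also have "\<dots> \<le> ennreal (sqrt s)" using \<eta>(2) s by (intro ennreal_leI) (simp add: mult_left_le_one_le)
      finally show ?thesis .
    qed
    have "(\<integral>\<^sup>+y. ennreal (cmod (\<eta> (y + t)) * K y) \<partial>lborel) =
       ennreal (3 * s) * (\<integral>\<^sup>+y. ennreal (cmod (\<eta> (y + t)) * indicator {a..a+1} y) \<partial>lborel)
       + (\<integral>\<^sup>+y. ennreal (cmod (\<eta> (y + t)) * indicator {a..a+s} y) \<partial>lborel)
       + (\<integral>\<^sup>+y. ennreal (cmod (\<eta> (y + t)) * indicator {a+1..a+1+s} y) \<partial>lborel)"
      unfolding pt by (simp add: nn_integral_add nn_integral_cmult)
    also have "\<dots> \<le> ennreal (3 * s) * ennreal 1 + ennreal (sqrt s) + ennreal (sqrt s)"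
      by (intro add_mono mult_left_mono b1 b2 b3) auto
    also have "\<dots> = ennreal (3 * s + 2 * sqrt s)"
      using s by (simp add: ennreal_plus[symmetric] del: ennreal_plus)
    finally show "(\<integral>\<^sup>+y. ennreal (cmod (\<eta> (y + t)) * K y) \<partial>lborel) \<le> ennreal (3 * s + 2 * sqrt s)" .
  qed
  then show ?thesis using e1 e2 by simp
qed

lemma osc:
  fixes \<phi> \<eta> :: "real \<Rightarrow> complex"
  assumes \<phi>: "integrable lborel \<phi>" and \<eta>: "L2 \<eta>" "L2norm \<eta> \<le> 1"
    and s: "0 < s" "s \<le> 1" and a: "2 * a * s = pi"
  shows "cmod (LINT x|lborel. integrated \<phi> \<eta> x * cnj (chi a x)) \<le>
     ((LINT t|lborel. cmod (\<phi> (t + s) - \<phi> t)) + (LINT t|lborel. cmod (\<phi> t)) * (3 * s + 2 * sqrt s)) / 2"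
proof -
  have [measurable]: "\<phi> \<in> borel_measurable borel" "\<eta> \<in> borel_measurable borel"
    using \<phi> \<eta> by (auto simp: L2_def)
  define G where "G t = (LINT x|lborel. \<eta> (x + t) * cnj (chi a x))" for t
  have Gm[measurable]: "G \<in> borel_measurable lborel"
  proof -
    have "(\<lambda>t. LINT x|lborel. \<eta> (x + t) * cnj (chi a x)) \<in> borel_measurable lborel" by measurable
    then show ?thesis unfolding G_def by simp
  qed
  have Gb: "cmod (G t) \<le> 1" for t unfolding G_def by (rule G_bound[OF \<eta>])
  define \<beta> where "\<beta> = 3 * s + 2 * sqrt s"
  have Gs: "cmod (G (t + s) + G t) \<le> \<beta>" for t
    unfolding G_def \<beta>_def by (rule Gsum_bound[OF \<eta> s a])
  define F where "F x t = \<phi> t * \<eta> (x + t) * cnj (chi a x)" for x t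
  have Fm[measurable]: "(\<lambda>(x, t). F x t) \<in> borel_measurable (lborel \<Otimes>\<^sub>M lborel)"
    unfolding F_def by measurable
  have Fint: "integrable (lborel \<Otimes>\<^sub>M lborel) (\<lambda>(x, t). F x t)"
    unfolding integrable_iff_bounded
  proof
    show "(\<lambda>(x, t). F x t) \<in> borel_measurable (lborel \<Otimes>\<^sub>M lborel)" by (rule Fm)
    have nm[measurable]: "(\<lambda>z. ennreal (norm (case z of (x, t) \<Rightarrow> F x t))) \<in> borel_measurable (lborel \<Otimes>\<^sub>M lborel)"
      by measurable
    have "(\<integral>\<^sup>+z. ennreal (norm (case z of (x, t) \<Rightarrow> F x t)) \<partial>(lborel \<Otimes>\<^sub>M lborel))
        = (\<integral>\<^sup>+t. (\<integral>\<^sup>+x. ennreal (norm (F x t)) \<partial>lborel) \<partial>lborel)"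
      using lborel_pair.nn_integral_snd[OF nm] by simp
    also have "\<dots> \<le> (\<integral>\<^sup>+t. ennreal (cmod (\<phi> t)) \<partial>lborel)"
    proof (rule nn_integral_mono)
      fix t
      have "(\<integral>\<^sup>+x. ennreal (norm (F x t)) \<partial>lborel)
          = (\<integral>\<^sup>+x. ennreal (cmod (\<phi> t)) * ennreal (cmod (\<eta> (x + t)) * indicator {a..a+1} x) \<partial>lborel)"
        by (intro nn_integral_cong) (simp add: F_def norm_mult chi_norm ennreal_mult[symmetric] mult_ac)
      also have "\<dots> = ennreal (cmod (\<phi> t)) * (\<integral>\<^sup>+x. ennreal (cmod (\<eta> (x + t)) * indicator {a..a+1} x) \<partial>lborel)"
        by (rule nn_integral_cmult) measurable
      also have "\<dots> \<le> ennreal (cmod (\<phi> t)) * ennreal 1"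
      proof (rule mult_left_mono)
        have "(\<integral>\<^sup>+x. ennreal (cmod (\<eta> (x + t)) * indicator {a..a+1} x) \<partial>lborel) \<le> ennreal (L2norm \<eta> * sqrt (a + 1 - a))"
          by (rule CSI[OF \<eta>(1)]) simp
        also have "\<dots> \<le> ennreal 1" using \<eta>(2) by (intro ennreal_leI) simp
        finally show "(\<integral>\<^sup>+x. ennreal (cmod (\<eta> (x + t)) * indicator {a..a+1} x) \<partial>lborel) \<le> ennreal 1" .
      qed simp
      finally show "(\<integral>\<^sup>+x. ennreal (norm (F x t)) \<partial>lborel) \<le> ennreal (cmod (\<phi> t))" by simp
    qed
    also have "\<dots> < \<infinity>"
      using \<phi> unfolding integrable_iff_bounded by simp
    finally show "(\<integral>\<^sup>+z. ennreal (norm (case z of (x, t) \<Rightarrow> F x t)) \<partial>(lborel \<Otimes>\<^sub>M lborel)) < \<infinity>" .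
  qed
  have fub: "(LINT t|lborel. (LINT x|lborel. F x t)) = (LINT x|lborel. (LINT t|lborel. F x t))"
    using lborel_pair.Fubini_integral[of F] Fint by simp
  have in1: "(LINT x|lborel. F x t) = \<phi> t * G t" for t
    unfolding F_def G_def by (simp add: mult.assoc)
  have in2: "(LINT t|lborel. F x t) = integrated \<phi> \<eta> x * cnj (chi a x)" for x
    unfolding F_def integrated_def transl_def by simp
  define I where "I = (LINT x|lborel. integrated \<phi> \<eta> x * cnj (chi a x))"
  have I1: "I = (LINT t|lborel. \<phi> t * G t)"
    using fub unfolding I_def in1 in2 by simp
  have I2: "I = (LINT t|lborel. \<phi> (t + s) * G (t + s))"
    unfolding I1 by (rule integral_shift_any[symmetric, of "\<lambda>t. \<phi> t * G t"])
  have \<phi>s: "integrable lborel (\<lambda>t. \<phi> (t + s))" by (rule integrable_shift(1)[OF \<phi>])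
  have i1: "integrable lborel (\<lambda>t. \<phi> t * G t)"
    by (rule Bochner_Integration.integrable_bound[OF \<phi>]) (auto simp: norm_mult intro!: AE_I2 mult_left_le Gb)
  have i2: "integrable lborel (\<lambda>t. \<phi> (t + s) * G (t + s))"
    by (rule Bochner_Integration.integrable_bound[OF \<phi>s]) (auto simp: norm_mult intro!: AE_I2 mult_left_le Gb)
  have "2 * I = (LINT t|lborel. \<phi> t * G t + \<phi> (t + s) * G (t + s))"
    using I1 I2 Bochner_Integration.integral_add[OF i1 i2] by simp
  also have "\<dots> = (LINT t|lborel. (\<phi> t - \<phi> (t + s)) * G t + \<phi> (t + s) * (G (t + s) + G t))"
    by (simp add: algebra_simps)
  finally have I3: "2 * I = (LINT t|lborel. (\<phi> t - \<phi> (t + s)) * G t + \<phi> (t + s) * (G (t + s) + G t))" .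
  have ib: "integrable lborel (\<lambda>t. cmod (\<phi> (t + s) - \<phi> t) + cmod (\<phi> (t + s)) * \<beta>)"
    using int_shift_diff[OF \<phi>, of s] integrable_norm[OF \<phi>s]
    by (intro Bochner_Integration.integrable_add integrable_mult_left) auto
  have "cmod (2 * I) \<le> (LINT t|lborel. cmod ((\<phi> t - \<phi> (t + s)) * G t + \<phi> (t + s) * (G (t + s) + G t)))"
    unfolding I3 by (rule Bochner_Integration.integral_norm_bound)
  also have "\<dots> \<le> (LINT t|lborel. cmod (\<phi> (t + s) - \<phi> t) + cmod (\<phi> (t + s)) * \<beta>)"
  proof (rule Bochner_Integration.integral_mono')
    show "integrable lborel (\<lambda>t. cmod (\<phi> (t + s) - \<phi> t) + cmod (\<phi> (t + s)) * \<beta>)" by (rule ib)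
    show "0 \<le> cmod (\<phi> (t + s) - \<phi> t) + cmod (\<phi> (t + s)) * \<beta>" for t
      unfolding \<beta>_def using s by simp
    fix t
    have "cmod ((\<phi> t - \<phi> (t + s)) * G t + \<phi> (t + s) * (G (t + s) + G t))
        \<le> cmod ((\<phi> t - \<phi> (t + s)) * G t) + cmod (\<phi> (t + s) * (G (t + s) + G t))"
      by (rule norm_triangle_ineq)
    also have "cmod ((\<phi> t - \<phi> (t + s)) * G t) \<le> cmod (\<phi> (t + s) - \<phi> t)"
      using Gb[of t] by (simp add: norm_mult norm_minus_commute mult_left_le)
    also have "cmod (\<phi> (t + s) * (G (t + s) + G t)) \<le> cmod (\<phi> (t + s)) * \<beta>"
      using Gs[of t] by (simp add: norm_mult mult_left_mono)
    finally show "cmod ((\<phi> t - \<phi> (t + s)) * G t + \<phi> (t + s) * (G (t + s) + G t))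
        \<le> cmod (\<phi> (t + s) - \<phi> t) + cmod (\<phi> (t + s)) * \<beta>" by simp
  qed
  also have "\<dots> = (LINT t|lborel. cmod (\<phi> (t + s) - \<phi> t)) + (LINT t|lborel. cmod (\<phi> t)) * \<beta>"
    using int_shift_diff[OF \<phi>, of s] integrable_norm[OF \<phi>s]
      integral_shift_any[of "\<lambda>t. cmod (\<phi> t)" s]
    by (simp add: Bochner_Integration.integral_add)
  finally show ?thesis unfolding I_def[symmetric] \<beta>_def by (simp add: norm_mult)
qed

theorem proposition8p2:
  shows "\<exists>f\<in>Cb. \<exists>L\<in>UL. \<not> (\<exists>L'\<in>UL. \<exists>B. bounded_op B \<and>
           op_eq (\<lambda>\<psi>. mult_op f (L \<psi>)) (\<lambda>\<psi>. L' (B \<psi>)))"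
proof -
  define f0 where "f0 x = cis (x\<^sup>2)" for x :: real
  define \<phi>0 where "\<phi>0 t = complex_of_real (indicator {0..1} t)" for t :: real
  have \<phi>0i: "integrable lborel \<phi>0"
    unfolding \<phi>0_def by (intro integrable_of_real integrable_real_indicator) auto
  have f0Cb: "f0 \<in> Cb"
    unfolding Cb_def
  proof (intro CollectI conjI)
    show "continuous_on UNIV f0" unfolding f0_def cis_conv_exp by (intro continuous_intros)
    show "bounded (range f0)" unfolding bounded_iff by (intro exI[of _ 1]) (auto simp: f0_def)
  qed
  have LUL: "integrated \<phi>0 \<in> UL" by (rule integrated_UL[OF \<phi>0i])
  show ?thesis
  proof (intro bexI[OF _ f0Cb] bexI[OF _ LUL] notI)
    assume "\<exists>L'\<in>UL. \<exists>B. bounded_op B \<and> op_eq (\<lambda>\<psi>. mult_op f0 (integrated \<phi>0 \<psi>)) (\<lambda>\<psi>. L' (B \<psi>))"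
    then obtain L' B where L'UL: "L' \<in> UL" and Bb: "bounded_op B"
      and eq: "op_eq (\<lambda>\<psi>. mult_op f0 (integrated \<phi>0 \<psi>)) (\<lambda>\<psi>. L' (B \<psi>))" by blast
    from Bb obtain CB where BL2: "\<And>\<psi>. L2 \<psi> \<Longrightarrow> L2 (B \<psi>)"
      and CB: "\<And>\<psi>. L2 \<psi> \<Longrightarrow> L2norm (B \<psi>) \<le> CB * L2norm \<psi>"
      unfolding bounded_op_def by blast
    from L'UL have L'b: "bounded_op L'"
      and L'app: "\<And>e. e > 0 \<Longrightarrow> \<exists>\<phi>. integrable lborel \<phi> \<and> op_dist L' (integrated \<phi>) < e"
      unfolding UL_def by auto
    from L'b obtain CL where L'L2: "\<And>\<psi>. L2 \<psi> \<Longrightarrow> L2 (L' \<psi>)"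
      and CL: "\<And>\<psi>. L2 \<psi> \<Longrightarrow> L2norm (L' \<psi>) \<le> CL * L2norm \<psi>"
      unfolding bounded_op_def by blast
    define c where "c = 1 / (2 * (\<bar>CB\<bar> + 1))"
    have c0: "c > 0" unfolding c_def by (simp add: add_pos_nonneg)
    have cB: "\<bar>CB\<bar> * (2 * c) \<le> 1" unfolding c_def by (simp add: field_simps)
    obtain \<phi> where \<phi>: "integrable lborel \<phi>" "op_dist L' (integrated \<phi>) < c / 4"
      using L'app[of "c / 4"] c0 by auto
    have [measurable]: "\<phi> \<in> borel_measurable borel" using \<phi>(1) by auto
    define A1 where "A1 = (LINT t|lborel. cmod (\<phi> t))"
    have A10: "A1 \<ge> 0" unfolding A1_def by simp
    have dist_le: "L2norm (\<lambda>x. L' \<xi> x - integrated \<phi> \<xi> x) \<le> op_dist L' (integrated \<phi>)"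
      if \<xi>: "L2 \<xi>" "L2norm \<xi> \<le> 1" for \<xi>
      unfolding op_dist_def
    proof (rule cSup_upper)
      show "L2norm (\<lambda>x. L' \<xi> x - integrated \<phi> \<xi> x) \<in>
          {L2norm (\<lambda>x. L' \<psi> x - integrated \<phi> \<psi> x) |\<psi>. L2 \<psi> \<and> L2norm \<psi> \<le> 1}"
        using \<xi> by blast
      show "bdd_above {L2norm (\<lambda>x. L' \<psi> x - integrated \<phi> \<psi> x) |\<psi>. L2 \<psi> \<and> L2norm \<psi> \<le> 1}"
      proof (rule bdd_aboveI, safe)
        fix \<psi> assume \<psi>: "L2 \<psi>" "L2norm \<psi> \<le> 1"
        have "L2norm (\<lambda>x. L' \<psi> x - integrated \<phi> \<psi> x) \<le> L2norm (L' \<psi>) + L2norm (integrated \<phi> \<psi>)"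
          by (rule L2_diff(2)[OF L'L2[OF \<psi>(1)] young(1)[OF \<phi>(1) \<psi>(1)]])
        also have "\<dots> \<le> CL * L2norm \<psi> + A1 * L2norm \<psi>"
          using CL[OF \<psi>(1)] young(2)[OF \<phi>(1) \<psi>(1)] unfolding A1_def by simp
        also have "\<dots> \<le> \<bar>CL\<bar> + A1"
        proof -
          have "CL * L2norm \<psi> \<le> \<bar>CL\<bar> * L2norm \<psi>"
            using L2norm_nonneg[of \<psi>] by (intro mult_right_mono) auto
          also have "\<dots> \<le> \<bar>CL\<bar> * 1"
            using \<psi>(2) by (intro mult_left_mono) auto
          finally have "CL * L2norm \<psi> \<le> \<bar>CL\<bar> * 1" .
          moreover have "A1 * L2norm \<psi> \<le> A1 * 1"
            using \<psi>(2) A10 by (intro mult_left_mono) auto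
          ultimately show ?thesis by simp
        qed
        finally show "L2norm (\<lambda>x. L' \<psi> x - integrated \<phi> \<psi> x) \<le> \<bar>CL\<bar> + A1" .
      qed
    qed
    obtain \<delta> where \<delta>: "\<delta> > 0" "\<And>s. \<bar>s\<bar> < \<delta> \<Longrightarrow> (LINT t|lborel. cmod (\<phi> (t + s) - \<phi> t)) < c / 4"
    proof -
      have "c / 4 > 0" using c0 by simp
      then show ?thesis using transl_cont[OF \<phi>(1)] that by blast
    qed
    define q where "q = c / (20 * (A1 + 1))"
    have q0: "q > 0" unfolding q_def using c0 A10 by simp
    define s where "s = min (\<delta> / 2) (min 1 (q\<^sup>2))"
    have s0: "s > 0" unfolding s_def using \<delta>(1) q0 by simp
    have s1: "s \<le> 1" unfolding s_def by simp
    have sd: "\<bar>s\<bar> < \<delta>" unfolding s_def using \<delta>(1) s0 s_def by auto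
    have sq: "sqrt s \<le> q"
    proof -
      have "s \<le> q\<^sup>2" unfolding s_def by simp
      then have "sqrt s \<le> sqrt (q\<^sup>2)" by (rule real_sqrt_le_mono)
      then show ?thesis using q0 by simp
    qed
    have ssq: "s \<le> sqrt s"
    proof -
      have "sqrt s \<le> 1" using s1 s0 by simp
      then have "sqrt s * sqrt s \<le> sqrt s * 1" using s0 by (intro mult_left_mono) auto
      then show ?thesis using s0 by simp
    qed
    have beta: "A1 * (3 * s + 2 * sqrt s) < c / 4"
    proof -
      have "A1 * (3 * s + 2 * sqrt s) \<le> A1 * (5 * q)"
        using ssq sq A10 by (intro mult_left_mono) auto
      also have "\<dots> = c / 4 * (A1 / (A1 + 1))" unfolding q_def using A10 by (simp add: field_simps)
      also have "\<dots> < c / 4" using c0 A10 by (simp add: field_simps)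
      finally show ?thesis .
    qed
    define a where "a = pi / (2 * s)"
    have a: "2 * a * s = pi" unfolding a_def using s0 by simp
    define \<psi> where "\<psi> x = complex_of_real c * indicator {a..a+2} x" for x :: real
    have \<psi>m: "\<psi> \<in> borel_measurable borel" unfolding \<psi>_def by measurable
    note \<psi>L2 = L2_support[OF \<psi>m _ less_imp_le[OF c0], of a "a+2"]
    have \<psi>L2': "L2 \<psi>" "L2norm \<psi> \<le> c * sqrt 2"
      using \<psi>L2 c0 by (auto simp: \<psi>_def indicator_def)
    define \<eta> where "\<eta> = B \<psi>"
    have \<eta>L2: "L2 \<eta>" unfolding \<eta>_def by (rule BL2[OF \<psi>L2'(1)])
    have \<eta>n: "L2norm \<eta> \<le> 1"
    proof -
      have "L2norm \<eta> \<le> CB * L2norm \<psi>" unfolding \<eta>_def by (rule CB[OF \<psi>L2'(1)])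
      also have "\<dots> \<le> \<bar>CB\<bar> * L2norm \<psi>" using L2norm_nonneg[of \<psi>] by (intro mult_right_mono) auto
      also have "\<dots> \<le> \<bar>CB\<bar> * (2 * c)"
      proof (intro mult_left_mono)
        have "sqrt 2 \<le> 2" by (rule real_le_lsqrt) auto
        then have "c * sqrt 2 \<le> c * 2" using c0 by (intro mult_left_mono) auto
        then show "L2norm \<psi> \<le> 2 * c" using \<psi>L2'(2) by simp
      qed simp
      also have "\<dots> \<le> 1" by (rule cB)
      finally show ?thesis .
    qed
    have Lval: "integrated \<phi>0 \<psi> x = complex_of_real c" if x: "x \<in> {a..a+1}" for x
    proof -
      have "integrated \<phi>0 \<psi> x = (LINT t|lborel. complex_of_real (c * indicator {0..1::real} t))"
        unfolding integrated_def transl_def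
      proof (rule Bochner_Integration.integral_cong[OF refl])
        fix t
        show "\<phi>0 t * \<psi> (x + t) = complex_of_real (c * indicator {0..1} t)"
          using x by (auto simp: \<phi>0_def \<psi>_def indicator_def)
      qed
      also have "\<dots> = complex_of_real c" by simp
      finally show ?thesis .
    qed
    have pairL: "(LINT x|lborel. mult_op f0 (integrated \<phi>0 \<psi>) x * cnj (chi a x)) = complex_of_real c"
    proof -
      have "(LINT x|lborel. mult_op f0 (integrated \<phi>0 \<psi>) x * cnj (chi a x))
          = (LINT x|lborel. complex_of_real (c * indicator {a..a+1} x))"
      proof (rule Bochner_Integration.integral_cong[OF refl])
        fix x
        show "mult_op f0 (integrated \<phi>0 \<psi>) x * cnj (chi a x) = complex_of_real (c * indicator {a..a+1} x)"
        proof (cases "x \<in> {a..a+1}")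
          case True
          have "f0 x * cnj (cis (x\<^sup>2)) = 1" unfolding f0_def by (simp add: cis_cnj cis_mult)
          then show ?thesis using True Lval[OF True]
            by (simp add: mult_op_def chi_def indicator_def mult_ac)
        next
          case False
          then have "chi a x = 0" by (simp add: chi_def)
          then show ?thesis using False by simp
        qed
      qed
      also have "\<dots> = complex_of_real c" by simp
      finally show ?thesis .
    qed
    have aeq: "AE x in lborel. mult_op f0 (integrated \<phi>0 \<psi>) x = L' \<eta> x"
      using eq \<psi>L2'(1) unfolding op_eq_def \<eta>_def by blast
    have L'\<eta>: "L2 (L' \<eta>)" by (rule L'L2[OF \<eta>L2])
    have [measurable]: "L' \<eta> \<in> borel_measurable borel" using L'\<eta> by (simp add: L2_def)
    have [measurable]: "integrated \<phi>0 \<psi> \<in> borel_measurable borel"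
      using \<phi>0i \<psi>m by (intro integrated_meas) auto
    have [measurable]: "f0 \<in> borel_measurable borel" unfolding f0_def by measurable
    have pairR: "(LINT x|lborel. L' \<eta> x * cnj (chi a x)) = complex_of_real c"
    proof -
      have "(LINT x|lborel. L' \<eta> x * cnj (chi a x)) = (LINT x|lborel. mult_op f0 (integrated \<phi>0 \<psi>) x * cnj (chi a x))"
        using aeq by (intro integral_cong_AE) (auto simp: mult_op_def)
      then show ?thesis using pairL by simp
    qed
    have I\<eta>: "L2 (integrated \<phi> \<eta>)" by (rule young(1)[OF \<phi>(1) \<eta>L2])
    define D where "D x = L' \<eta> x - integrated \<phi> \<eta> x" for x
    have DL2: "L2 D" unfolding D_def by (rule L2_diff(1)[OF L'\<eta> I\<eta>])
    have Dn: "L2norm D < c / 4"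
      using dist_le[OF \<eta>L2 \<eta>n] \<phi>(2) unfolding D_def by simp
    have chiL2: "L2 (chi a)" "L2norm (chi a) \<le> 1 * sqrt (a + 1 - a)"
      by (rule L2_support[where a=a and b="a+1" and M=1]; auto simp: chi_norm)+
    have iD: "integrable lborel (\<lambda>x. D x * cnj (chi a x))" by (rule CS(1)[OF DL2 chiL2(1)])
    have iI: "integrable lborel (\<lambda>x. integrated \<phi> \<eta> x * cnj (chi a x))" by (rule CS(1)[OF I\<eta> chiL2(1)])
    have split: "(LINT x|lborel. L' \<eta> x * cnj (chi a x)) =
        (LINT x|lborel. D x * cnj (chi a x)) + (LINT x|lborel. integrated \<phi> \<eta> x * cnj (chi a x))"
      using Bochner_Integration.integral_add[OF iD iI] by (simp add: D_def algebra_simps)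
    have bD: "cmod (LINT x|lborel. D x * cnj (chi a x)) < c / 4"
    proof -
      have "cmod (LINT x|lborel. D x * cnj (chi a x)) \<le> L2norm D * L2norm (chi a)"
        by (rule CS(2)[OF DL2 chiL2(1)])
      also have "\<dots> \<le> L2norm D * 1"
        using chiL2(2) L2norm_nonneg[of D] by (intro mult_left_mono) auto
      finally show ?thesis using Dn by simp
    qed
    have bI: "cmod (LINT x|lborel. integrated \<phi> \<eta> x * cnj (chi a x)) < c / 4"
    proof -
      have "cmod (LINT x|lborel. integrated \<phi> \<eta> x * cnj (chi a x)) \<le>
          ((LINT t|lborel. cmod (\<phi> (t + s) - \<phi> t)) + A1 * (3 * s + 2 * sqrt s)) / 2"
        unfolding A1_def by (rule osc[OF \<phi>(1) \<eta>L2 \<eta>n s0 s1 a])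
      also have "\<dots> < (c / 4 + c / 4) / 2"
        using \<delta>(2)[OF sd] beta by simp
      finally show ?thesis by simp
    qed
    have "c = cmod (complex_of_real c)" using c0 by simp
    also have "\<dots> = cmod ((LINT x|lborel. D x * cnj (chi a x)) + (LINT x|lborel. integrated \<phi> \<eta> x * cnj (chi a x)))"
      using pairR split by simp
    also have "\<dots> \<le> cmod (LINT x|lborel. D x * cnj (chi a x)) + cmod (LINT x|lborel. integrated \<phi> \<eta> x * cnj (chi a x))"
      by (rule norm_triangle_ineq)
    also have "\<dots> < c / 4 + c / 4" using bD bI by simp
    finally show False using c0 by simp
  qed
qed


end
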